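(* Let $X$ have a pdf $f$ satisfying Conditions (A) and (B) below. For $\delta>0$ let $D=D(Q_{\mathrm{uni}}^\delta)$ be the mean-squared distortion of the uniform quantizer with cell size $\delta$. Then $$\lim_{\delta\to0}\frac{\mathrm{AoI}(S_{\mathrm z},Q_{\mathrm{uni}}^\delta,F^* )}{\log_2 D}=-\frac34$$ and $$\lim_{\delta\to0}\Big[\mathrm{AoI}(S_{\mathrm z},Q_{\mathrm{uni}}^\delta,F^* )+\tfrac32\log_2\delta\Big]=\tfrac32 h(X).$$
   Context: Let $X$ be a real random variable with pdf $f$. Condition (A): $f$ is continuous and differentiable, and its support is a bounded interval $I$. Condition (B): the integrals $\int_I f(x)\log_2^2 f(x)\,dx$ and the differential entropy $h(X)=-\int_I f(x)\log_2 f(x)\,dx$ exist and are finite. Quantizers. A quantizer $Q$ partitions $I$ into intervals $[a_{i-1},a_i]$ with representation points $c_i$. Write $p_i=P(X\in[a_{i-1},a_i])$. The mean-squared distortion is $D(Q)=\sum_i\int_{a_{i-1}}^{a_i}(x-c_i)^2f(x)\,dx$. The uniform quantizer $Q_{\mathrm{uni}}^\delta$ partitions $I$ into consecutive cells of length $\delta$, with representation points at the cell midpoints. Codes. A real-valued code assigns lengths $l_i\in\mathbb R^+$ to the cells, subject to $\sum_i2^{-l_i}\le1$. The random codeword length is $L=l_i$ when $X$ is in cell $i$. Objective. Under the zero-wait sampling policy $S_{\mathrm z}$, the AoI of a code $l$ is $\mathrm{AoI}(S_{\mathrm z},Q,l)=\frac{E[L^2]}{2E[L]}+E[L]$. We write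 $\mathrm{AoI}(S_{\mathrm z},Q,F^* )=\inf_l\mathrm{AoI}(S_{\mathrm z},Q,l)$, the infimum over real-valued codes; this is the value of the real-valued AoI-optimal code $F^*$. *)

theory Defs
  imports "HOL-Analysis.Analysis"
begin

text \<open>A quantizer with n cells: cell i (for i in 1..n) is the interval
  [q (i-1), q i], with representation point c i.\<close>

definition cell_prob :: "(real \<Rightarrow> real) \<Rightarrow> (nat \<Rightarrow> real) \<Rightarrow> nat \<Rightarrow> real" where
  "cell_prob f q i = (LINT x:{q (i - 1)..q i}|lborel. f x)"

definition distortion ::
  "(real \<Rightarrow> real) \<Rightarrow> nat \<Rightarrow> (nat \<Rightarrow> real) \<Rightarrow> (nat \<Rightarrow> real) \<Rightarrow> real" where
  "distortion f n q c = (\<Sum>i=1..n. LINT x:{q (i - 1)..q i}|lborel. (x - c i)^2 * f x)"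

definition mean_len :: "(real \<Rightarrow> real) \<Rightarrow> nat \<Rightarrow> (nat \<Rightarrow> real) \<Rightarrow> (nat \<Rightarrow> real) \<Rightarrow> real" where
  "mean_len f n q l = (\<Sum>i=1..n. cell_prob f q i * l i)"

definition second_moment_len ::
  "(real \<Rightarrow> real) \<Rightarrow> nat \<Rightarrow> (nat \<Rightarrow> real) \<Rightarrow> (nat \<Rightarrow> real) \<Rightarrow> real" where
  "second_moment_len f n q l = (\<Sum>i=1..n. cell_prob f q i * (l i)^2)"

definition real_code :: "nat \<Rightarrow> (nat \<Rightarrow> real) \<Rightarrow> bool" where
  "real_code n l \<longleftrightarrow> (\<forall>i\<in>{1..n}. 0 < l i) \<and> (\<Sum>i=1..n. 2 powr (- l i)) \<le> 1"

definition aoi_zw :: "(real \<Rightarrow> real) \<Rightarrow> nat \<Rightarrow> (nat \<Rightarrow> real) \<Rightarrow> (nat \<Rightarrow> real) \<Rightarrow> real" where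
  "aoi_zw f n q l = second_moment_len f n q l / (2 * mean_len f n q l) + mean_len f n q l"

definition aoi_opt :: "(real \<Rightarrow> real) \<Rightarrow> nat \<Rightarrow> (nat \<Rightarrow> real) \<Rightarrow> real" where
  "aoi_opt f n q = (INF l \<in> {l. real_code n l}. aoi_zw f n q l)"

definition uni_num :: "real \<Rightarrow> real \<Rightarrow> real \<Rightarrow> nat" where
  "uni_num lo hi \<delta> = nat \<lceil>(hi - lo) / \<delta>\<rceil>"

definition uni_pts :: "real \<Rightarrow> real \<Rightarrow> nat \<Rightarrow> real" where
  "uni_pts lo \<delta> i = lo + real i * \<delta>"

definition uni_mid :: "real \<Rightarrow> real \<Rightarrow> nat \<Rightarrow> real" where
  "uni_mid lo \<delta> i = lo + (real i - 1/2) * \<delta>"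

definition diff_entropy :: "(real \<Rightarrow> real) \<Rightarrow> real \<Rightarrow> real \<Rightarrow> real" where
  "diff_entropy f lo hi = - (LINT x:{lo..hi}|lborel. f x * log 2 (f x))"

end

theory Submission
  imports Defs "HOL-Real_Asymp.Real_Asymp"
begin


lemma cont_xlog:
  assumes "(0::real) < M"
  shows "continuous_on {0..M} (\<lambda>t. t * log 2 t)"
    and "continuous_on {0..M} (\<lambda>t. t * (log 2 t)^2)"
proof -
  have L1: "((\<lambda>t::real. t * log 2 t) \<longlongrightarrow> 0) (at_right 0)"
    unfolding log_def by real_asymp
  have L2: "((\<lambda>t::real. t * (log 2 t)^2) \<longlongrightarrow> 0) (at_right 0)"
    unfolding log_def by real_asymp
  show "continuous_on {0..M} (\<lambda>t. t * log 2 t)"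
  proof (clarsimp simp: continuous_on_eq_continuous_within)
    fix x :: real assume x: "0 \<le> x" "x \<le> M"
    show "continuous (at x within {0..M}) (\<lambda>t. t * log 2 t)"
    proof (cases "x = 0")
      case True
      then show ?thesis using L1 assms
        by (simp add: continuous_within at_within_Icc_at_right)
    next
      case False
      then have "isCont (\<lambda>t. t * log 2 t) x" using x
        by (intro continuous_intros) auto
      then show ?thesis by (simp add: continuous_at_imp_continuous_at_within)
    qed
  qed
  show "continuous_on {0..M} (\<lambda>t. t * (log 2 t)^2)"
  proof (clarsimp simp: continuous_on_eq_continuous_within)
    fix x :: real assume x: "0 \<le> x" "x \<le> M"
    show "continuous (at x within {0..M}) (\<lambda>t. t * (log 2 t)^2)"
    proof (cases "x = 0")
      case True
      then show ?thesis using L2 assms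
        by (simp add: continuous_within at_within_Icc_at_right)
    next
      case False
      then have "isCont (\<lambda>t. t * (log 2 t)^2) x" using x
        by (intro continuous_intros) auto
      then show ?thesis by (simp add: continuous_at_imp_continuous_at_within)
    qed
  qed
qed




lemma sum_cells:
  fixes w :: "real \<Rightarrow> real"
  assumes "0 \<le> \<delta>" "\<And>a b. w integrable_on {a..b}"
  shows "(\<Sum>i=1..n. integral {lo + real (i - 1) * \<delta> .. lo + real i * \<delta>} w)
         = integral {lo .. lo + real n * \<delta>} w"
proof (induction n)
  case 0
  then show ?case by simp
next
  case (Suc n)
  have "(\<Sum>i=1..Suc n. integral {lo + real (i - 1) * \<delta> .. lo + real i * \<delta>} w)
     = integral {lo .. lo + real n * \<delta>} w + integral {lo + real n * \<delta> .. lo + real (Suc n) * \<delta>} w"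
    using Suc by (simp add: sum.atLeast1_atMost_eq)
  also have "\<dots> = integral {lo .. lo + real (Suc n) * \<delta>} w"
    by (rule Henstock_Kurzweil_Integration.integral_combine) (use assms in \<open>auto simp: algebra_simps\<close>)
  finally show ?case .
qed

locale pdfs =
  fixes f :: "real \<Rightarrow> real" and lo hi :: real
  assumes meas: "f \<in> borel_measurable lborel"
    and nonneg: "\<And>x. 0 \<le> f x"
    and intf: "integrable lborel f"
    and total: "(\<integral>x. f x \<partial>lborel) = 1"
    and lohi: "lo < hi"
    and out: "\<And>x. x \<notin> {lo..hi} \<Longrightarrow> f x = 0"
    and supp: "closure {x. f x \<noteq> 0} = {lo..hi}"
    and cont: "continuous_on {lo..hi} f"
begin

definition N :: "real \<Rightarrow> nat" where "N \<delta> = uni_num lo hi \<delta>"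
definition pp :: "real \<Rightarrow> nat \<Rightarrow> real" where "pp \<delta> i = cell_prob f (uni_pts lo \<delta>) i"

lemma N_props:
  assumes "0 < \<delta>"
  shows "1 \<le> N \<delta>" "real (N \<delta>) * \<delta> - \<delta> < hi - lo" "hi - lo \<le> real (N \<delta>) * \<delta>"
    "real (N \<delta>) * \<delta> \<le> hi - lo + \<delta>"
proof -
  define t where "t = (hi - lo) / \<delta>"
  have pos: "0 < t" using assms lohi by (simp add: t_def)
  have c: "of_int \<lceil>t\<rceil> - 1 < t" "t \<le> of_int \<lceil>t\<rceil>" using ceiling_correct by auto
  have cp: "0 < \<lceil>t\<rceil>" using pos by simp
  have R: "real (N \<delta>) = of_int \<lceil>t\<rceil>" unfolding N_def uni_num_def t_def[symmetric] using cp by simp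
  have td: "t * \<delta> = hi - lo" using assms by (simp add: t_def)
  show "1 \<le> N \<delta>" unfolding N_def uni_num_def t_def[symmetric] using cp by linarith
  have "(of_int \<lceil>t\<rceil> - 1) * \<delta> < t * \<delta>" using c assms by simp
  then show "real (N \<delta>) * \<delta> - \<delta> < hi - lo" using R td by (simp add: algebra_simps)
  have "t * \<delta> \<le> of_int \<lceil>t\<rceil> * \<delta>" using c assms by (simp add: mult_right_mono)
  then show "hi - lo \<le> real (N \<delta>) * \<delta>" using R td by simp
  have "of_int \<lceil>t\<rceil> * \<delta> \<le> (t + 1) * \<delta>" using c assms by (intro mult_right_mono) auto
  then show "real (N \<delta>) * \<delta> \<le> hi - lo + \<delta>" using R td by (simp add: algebra_simps)
qed


definition Mf :: real where "Mf = (SOME M. 0 < M \<and> (\<forall>x. f x \<le> M))"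

lemma Mf_prop: "0 < Mf" "\<And>x. f x \<le> Mf"
proof -
  have "compact (f ` {lo..hi})" using cont by (intro compact_continuous_image) auto
  then obtain B where B: "\<forall>y\<in>f ` {lo..hi}. norm y \<le> B" using compact_imp_bounded bounded_iff by metis
  have "\<exists>M. 0 < M \<and> (\<forall>x. f x \<le> M)"
  proof (intro exI[of _ "abs B + 1"] conjI allI)
    fix x show "f x \<le> abs B + 1"
      using B out[of x] by (cases "x \<in> {lo..hi}") force+
  qed auto
  from someI_ex[OF this] show "0 < Mf" "\<And>x. f x \<le> Mf" unfolding Mf_def by auto
qed

lemma int_ext:
  fixes w :: "real \<Rightarrow> real"
  assumes "\<And>x. x \<notin> {lo..hi} \<Longrightarrow> w x = 0" "continuous_on {lo..hi} w"
  shows "w integrable_on {a..b}"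
proof -
  have "w integrable_on {lo..hi}" using assms(2) by (rule integrable_continuous_interval)
  then have "w integrable_on UNIV" by (rule integrable_on_superset) (use assms in auto)
  then show ?thesis by (rule integrable_on_subinterval) auto
qed

lemma tail:
  fixes w :: "real \<Rightarrow> real"
  assumes "\<And>x. x \<notin> {lo..hi} \<Longrightarrow> w x = 0" "continuous_on {lo..hi} w" "hi \<le> b"
  shows "integral {lo..b} w = integral {lo..hi} w"
proof -
  have "(w has_integral 0) {hi..b}"
    by (rule has_integral_spike_finite[of "{hi}" _ _ "\<lambda>_. 0"]) (use assms in auto)
  then have "integral {hi..b} w = 0" by (rule integral_unique)
  moreover have "integral {lo..hi} w + integral {hi..b} w = integral {lo..b} w"
    by (rule Henstock_Kurzweil_Integration.integral_combine) (use assms lohi int_ext in auto)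
  ultimately show ?thesis by simp
qed

lemma f_int: "f integrable_on {a..b}"
  by (rule int_ext) (use out cont in auto)

lemma set_int_f: "set_integrable lborel {a..b} f"
  unfolding set_integrable_def by (rule integrable_mult_indicator) (use intf in auto)

lemma pp_eq: "pp \<delta> i = integral {lo + real (i - 1) * \<delta> .. lo + real i * \<delta>} f"
  unfolding pp_def cell_prob_def uni_pts_def
  by (rule set_borel_integral_eq_integral(2)[OF set_int_f])

lemma total_int: "integral {lo..hi} f = 1"
proof -
  have "(LINT x:{lo..hi}|lborel. f x) = (\<integral>x. f x \<partial>lborel)"
    unfolding set_lebesgue_integral_def
    by (rule Bochner_Integration.integral_cong) (use out in \<open>auto simp: indicator_def\<close>)
  then show ?thesis using total set_borel_integral_eq_integral(2)[OF set_int_f] by simp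
qed

lemma sum_pp: assumes "0 < \<delta>" shows "(\<Sum>i=1..N \<delta>. pp \<delta> i) = 1"
proof -
  have "(\<Sum>i=1..N \<delta>. pp \<delta> i) = integral {lo .. lo + real (N \<delta>) * \<delta>} f"
    unfolding pp_eq by (rule sum_cells) (use assms f_int in auto)
  also have "\<dots> = integral {lo..hi} f"
    by (rule tail) (use out cont N_props[OF assms] in auto)
  finally show ?thesis using total_int by simp
qed

lemma pp_bounds: assumes "0 < \<delta>" "1 \<le> i" shows "0 \<le> pp \<delta> i" "pp \<delta> i \<le> Mf * \<delta>"
proof -
  have len: "lo + real i * \<delta> - (lo + real (i - 1) * \<delta>) = \<delta>" using assms by (simp add: of_nat_diff algebra_simps)
  show "0 \<le> pp \<delta> i" unfolding pp_eq by (rule integral_nonneg) (use f_int nonneg in auto)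
  have hi: "(f has_integral integral {lo + real (i - 1) * \<delta> .. lo + real i * \<delta>} f) (cbox (lo + real (i - 1) * \<delta>) (lo + real i * \<delta>))"
    using integrable_integral[OF f_int] by (simp add: cbox_interval)
  have "norm (integral {lo + real (i - 1) * \<delta> .. lo + real i * \<delta>} f)
     \<le> Mf * measure lborel (cbox (lo + real (i - 1) * \<delta>) (lo + real i * \<delta>))"
    by (rule has_integral_bound[OF _ hi]) (use Mf_prop nonneg in auto)
  also have "\<dots> = Mf * \<delta>" using len assms by (simp add: cbox_interval)
  finally show "pp \<delta> i \<le> Mf * \<delta>" unfolding pp_eq by simp
qed


lemma cell_approx:
  fixes a b \<delta> \<epsilon> :: real
  assumes "0 < \<delta>" "b - a = \<delta>" "0 \<le> \<epsilon>"
    and "\<And>x y. x \<in> {a..b} \<Longrightarrow> y \<in> {a..b} \<Longrightarrow> \<bar>f x - f y\<bar> \<le> \<epsilon>"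
    and y: "y \<in> {a..b}"
  shows "\<bar>f y - integral {a..b} f / \<delta>\<bar> \<le> \<epsilon>"
proof -
  have hi: "((\<lambda>x. f x - f y) has_integral (integral {a..b} f - f y * \<delta>)) (cbox a b)"
    using has_integral_diff[OF integrable_integral[OF f_int[of a b]] has_integral_const_real[of "f y" a b]] assms
    by (simp add: cbox_interval mult.commute)
  have "norm (integral {a..b} f - f y * \<delta>) \<le> \<epsilon> * measure lborel (cbox a b)"
    by (rule has_integral_bound[OF _ hi]) (use assms in \<open>auto simp: cbox_interval\<close>)
  then have "\<bar>integral {a..b} f - f y * \<delta>\<bar> \<le> \<epsilon> * \<delta>" using assms by (simp add: cbox_interval)
  then have "\<bar>(integral {a..b} f - f y * \<delta>) / \<delta>\<bar> \<le> \<epsilon>" using assms by (simp add: abs_divide divide_le_eq)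
  moreover have "(integral {a..b} f - f y * \<delta>) / \<delta> = integral {a..b} f / \<delta> - f y" using assms by (simp add: field_simps)
  ultimately show ?thesis by (simp add: abs_minus_commute)
qed

lemma ucell:
  assumes "0 < \<epsilon>"
  shows "\<exists>d>0. \<forall>\<delta>. 0 < \<delta> \<longrightarrow> \<delta> < d \<longrightarrow> (\<forall>i. 1 \<le> i \<longrightarrow> i < N \<delta> \<longrightarrow>
          (\<forall>y\<in>{lo + real (i - 1) * \<delta> .. lo + real i * \<delta>}. \<bar>f y - pp \<delta> i / \<delta>\<bar> \<le> \<epsilon>))"
proof -
  have "uniformly_continuous_on {lo..hi} f" using cont by (intro compact_uniformly_continuous) auto
  then obtain d where d: "d > 0" "\<And>x x'. x \<in> {lo..hi} \<Longrightarrow> x' \<in> {lo..hi} \<Longrightarrow> dist x' x < d \<Longrightarrow> dist (f x') (f x) < \<epsilon>"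
    unfolding uniformly_continuous_on_def using assms by metis
  show ?thesis
  proof (intro exI[of _ d] conjI allI impI ballI)
    fix \<delta> :: real and i :: nat and y
    assume \<delta>: "0 < \<delta>" "\<delta> < d" and i: "1 \<le> i" "i < N \<delta>"
      and y: "y \<in> {lo + real (i - 1) * \<delta> .. lo + real i * \<delta>}"
    have ri: "real (i - 1) = real i - 1" using i by (simp add: of_nat_diff)
    have "real i \<le> real (N \<delta>) - 1" using i by linarith
    then have "real i * \<delta> \<le> (real (N \<delta>) - 1) * \<delta>" using \<delta> by (intro mult_right_mono) auto
    then have top: "lo + real i * \<delta> < hi" using N_props(2)[OF \<delta>(1)] by (simp add: algebra_simps)
    have bot: "lo \<le> lo + real (i - 1) * \<delta>" using \<delta> by simp
    show "\<bar>f y - pp \<delta> i / \<delta>\<bar> \<le> \<epsilon>" unfolding pp_eq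
    proof (rule cell_approx[OF \<delta>(1) _ _ _ y])
      show "lo + real i * \<delta> - (lo + real (i - 1) * \<delta>) = \<delta>" using ri by (simp add: algebra_simps)
      fix x z assume x: "x \<in> {lo + real (i - 1) * \<delta>..lo + real i * \<delta>}" and z: "z \<in> {lo + real (i - 1) * \<delta>..lo + real i * \<delta>}"
      have "dist x z < d" using x z ri \<delta> by (auto simp: dist_real_def algebra_simps abs_if)
      then have "dist (f x) (f z) < \<epsilon>" using d(2)[of z x] x z top bot by auto
      then show "\<bar>f x - f z\<bar> \<le> \<epsilon>" by (simp add: dist_real_def)
    qed (use assms in auto)
  qed (use d in auto)
qed


lemma int_bound:
  fixes g :: "real \<Rightarrow> real"
  assumes "g integrable_on {a..b}" "a \<le> b" "0 \<le> K" "\<And>x. x \<in> {a..b} \<Longrightarrow> \<bar>g x\<bar> \<le> K"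
  shows "\<bar>integral {a..b} g\<bar> \<le> K * (b - a)"
proof -
  have hi: "(g has_integral integral {a..b} g) (cbox a b)"
    using integrable_integral[OF assms(1)] by (simp add: cbox_interval)
  have "norm (integral {a..b} g) \<le> K * measure lborel (cbox a b)"
    by (rule has_integral_bound[OF _ hi]) (use assms in \<open>auto simp: cbox_interval\<close>)
  then show ?thesis using assms by (simp add: cbox_interval)
qed

lemma cell_len: "1 \<le> i \<Longrightarrow> lo + real i * \<delta> - (lo + real (i - 1) * \<delta>) = \<delta>"
  by (simp add: of_nat_diff algebra_simps)

lemma gen:
  fixes \<psi> :: "real \<Rightarrow> real"
  assumes \<psi>c: "continuous_on {0..Mf} \<psi>" and \<psi>0: "\<psi> 0 = 0"
  shows "((\<lambda>\<delta>. (\<Sum>i=1..N \<delta>. \<delta> * \<psi> (pp \<delta> i / \<delta>)) - integral {lo..hi} (\<lambda>x. \<psi> (f x))) \<longlongrightarrow> 0) (at_right 0)"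
proof -
  define w where "w = (\<lambda>x. \<psi> (f x))"
  have fr: "f x \<in> {0..Mf}" for x using nonneg Mf_prop by auto
  have wout: "\<And>x. x \<notin> {lo..hi} \<Longrightarrow> w x = 0" using out \<psi>0 by (simp add: w_def)
  have wc: "continuous_on {lo..hi} w" unfolding w_def
    by (rule continuous_on_compose2[OF \<psi>c cont]) (use fr in auto)
  have wi: "w integrable_on {a..b}" for a b by (rule int_ext[OF wout wc])
  have "compact (\<psi> ` {0..Mf})" using \<psi>c by (intro compact_continuous_image) auto
  then obtain B0 where B0: "\<forall>y\<in>\<psi> ` {0..Mf}. norm y \<le> B0" using compact_imp_bounded bounded_iff by metis
  define B where "B = \<bar>B0\<bar>"
  have B: "0 \<le> B" "\<And>t. t \<in> {0..Mf} \<Longrightarrow> \<bar>\<psi> t\<bar> \<le> B" using B0 by (force simp: B_def)+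
  have wB: "\<bar>w x\<bar> \<le> B" for x using B fr by (simp add: w_def)
  have uc: "uniformly_continuous_on {0..Mf} \<psi>" using \<psi>c by (intro compact_uniformly_continuous) auto
  show ?thesis
  proof (rule tendstoI)
    fix e :: real assume e: "0 < e"
    define e' where "e' = e / (4 * (hi - lo + 1))"
    have e'p: "0 < e'" using e lohi by (simp add: e'_def)
    obtain \<eta> where \<eta>: "\<eta> > 0" "\<And>x x'. x \<in> {0..Mf} \<Longrightarrow> x' \<in> {0..Mf} \<Longrightarrow> dist x' x < \<eta> \<Longrightarrow> dist (\<psi> x') (\<psi> x) < e'"
      using uc e'p unfolding uniformly_continuous_on_def by metis
    obtain d where d: "d > 0" "\<And>\<delta> i y. 0 < \<delta> \<Longrightarrow> \<delta> < d \<Longrightarrow> 1 \<le> i \<Longrightarrow> i < N \<delta> \<Longrightarrow>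
          y \<in> {lo + real (i - 1) * \<delta> .. lo + real i * \<delta>} \<Longrightarrow> \<bar>f y - pp \<delta> i / \<delta>\<bar> \<le> \<eta> / 2"
      using ucell[of "\<eta>/2"] \<eta>(1) by auto
    define d0 where "d0 = min d (min 1 (e / (4 * (B + 1))))"
    have d0: "0 < d0" using d e B by (simp add: d0_def)
    show "eventually (\<lambda>\<delta>. dist ((\<Sum>i=1..N \<delta>. \<delta> * \<psi> (pp \<delta> i / \<delta>)) - integral {lo..hi} (\<lambda>x. \<psi> (f x))) 0 < e) (at_right 0)"
      unfolding eventually_at_right_field
    proof (intro exI[of _ d0] conjI allI impI)
      fix \<delta> :: real assume \<delta>: "0 < \<delta>" "\<delta> < d0"
      have \<delta>d: "\<delta> < d" "\<delta> < 1" "\<delta> * (4 * (B + 1)) < e" using \<delta> B by (auto simp: d0_def less_divide_eq)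
      define C where "C i = {lo + real (i - 1) * \<delta> .. lo + real i * \<delta>}" for i
      have sumw: "(\<Sum>i=1..N \<delta>. integral (C i) w) = integral {lo..hi} w"
      proof -
        have "(\<Sum>i=1..N \<delta>. integral (C i) w) = integral {lo .. lo + real (N \<delta>) * \<delta>} w"
          unfolding C_def by (rule sum_cells) (use \<delta> wi in auto)
        also have "\<dots> = integral {lo..hi} w" by (rule tail[OF wout wc]) (use N_props[OF \<delta>(1)] in auto)
        finally show ?thesis .
      qed
      have cr: "pp \<delta> i / \<delta> \<in> {0..Mf}" if "1 \<le> i" for i
        using pp_bounds[OF \<delta>(1) that] \<delta> by (auto simp: divide_le_eq mult.commute)
      have trm: "\<bar>\<delta> * \<psi> (pp \<delta> i / \<delta>) - integral (C i) w\<bar> \<le> \<delta> * e' + (if i = N \<delta> then 2 * \<delta> * B else 0)"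
        if i: "i \<in> {1..N \<delta>}" for i
      proof (cases "i = N \<delta>")
        case True
        have "\<bar>integral (C i) w\<bar> \<le> B * (lo + real i * \<delta> - (lo + real (i - 1) * \<delta>))"
          unfolding C_def by (rule int_bound[OF wi _ B(1)]) (use wB cell_len[of i \<delta>] i \<delta> in auto)
        then have "\<bar>integral (C i) w\<bar> \<le> B * \<delta>" using cell_len[of i \<delta>] i by simp
        moreover have "\<bar>\<delta> * \<psi> (pp \<delta> i / \<delta>)\<bar> \<le> \<delta> * B"
          using B(2)[OF cr] i \<delta> by (auto simp: abs_mult intro: mult_left_mono)
        moreover have "0 < \<delta> * e'" using \<delta> e'p by simp
        ultimately show ?thesis using True by (simp add: abs_le_iff mult_ac)
      next
        case False
        then have iN: "i < N \<delta>" using i by auto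
        let ?c = "pp \<delta> i / \<delta>"
        have "integral (C i) w - \<delta> * \<psi> ?c = integral (C i) (\<lambda>x. w x - \<psi> ?c)"
          using integral_diff[OF wi integrable_const_ivl, of _ _ "\<psi> ?c"] cell_len[of i \<delta>] i \<delta>
          unfolding C_def by (simp add: mult.commute)
        also have "\<bar>\<dots>\<bar> \<le> e' * \<delta>"
        proof -
          have "\<bar>integral (C i) (\<lambda>x. w x - \<psi> ?c)\<bar> \<le> e' * (lo + real i * \<delta> - (lo + real (i - 1) * \<delta>))"
            unfolding C_def
          proof (rule int_bound)
            show "(\<lambda>x. w x - \<psi> ?c) integrable_on {lo + real (i - 1) * \<delta>..lo + real i * \<delta>}"
              using wi by (intro integrable_diff) auto
            fix x assume x: "x \<in> {lo + real (i - 1) * \<delta>..lo + real i * \<delta>}"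
            have "\<bar>f x - ?c\<bar> \<le> \<eta> / 2" using d(2)[OF \<delta>(1) \<delta>d(1) _ iN x] i by auto
            then have "dist (f x) ?c < \<eta>" using \<eta>(1) by (simp add: dist_real_def)
            then have "dist (\<psi> (f x)) (\<psi> ?c) < e'" using \<eta>(2)[OF cr fr] i by auto
            then show "\<bar>w x - \<psi> ?c\<bar> \<le> e'" by (simp add: w_def dist_real_def)
          qed (use e'p i \<delta> cell_len[of i \<delta>] in auto)
          then show ?thesis using cell_len[of i \<delta>] i by simp
        qed
        finally show ?thesis using False by (simp add: abs_minus_commute mult.commute)
      qed
      have "\<bar>(\<Sum>i=1..N \<delta>. \<delta> * \<psi> (pp \<delta> i / \<delta>)) - integral {lo..hi} w\<bar>
            = \<bar>\<Sum>i=1..N \<delta>. (\<delta> * \<psi> (pp \<delta> i / \<delta>) - integral (C i) w)\<bar>"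
        using sumw by (simp add: sum_subtractf)
      also have "\<dots> \<le> (\<Sum>i=1..N \<delta>. \<bar>\<delta> * \<psi> (pp \<delta> i / \<delta>) - integral (C i) w\<bar>)" by (rule sum_abs)
      also have "\<dots> \<le> (\<Sum>i=1..N \<delta>. \<delta> * e' + (if i = N \<delta> then 2 * \<delta> * B else 0))" by (rule sum_mono) (rule trm)
      also have "\<dots> = real (N \<delta>) * \<delta> * e' + 2 * \<delta> * B"
        using N_props(1)[OF \<delta>(1)] by (simp add: sum.distrib)
      also have "\<dots> \<le> (hi - lo + 1) * e' + 2 * \<delta> * B"
        using N_props(4)[OF \<delta>(1)] \<delta>d(2) e'p by (intro add_right_mono mult_right_mono) auto
      also have "\<dots> < e"
      proof -
        have "(hi - lo + 1) * e' = e / 4" using lohi by (simp add: e'_def field_simps)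
        moreover have "2 * \<delta> * B \<le> e / 2" using \<delta>d(3) B \<delta> by (simp add: algebra_simps)
        ultimately show ?thesis using e by linarith
      qed
      finally show "dist ((\<Sum>i=1..N \<delta>. \<delta> * \<psi> (pp \<delta> i / \<delta>)) - integral {lo..hi} (\<lambda>x. \<psi> (f x))) 0 < e"
        by (simp add: dist_real_def w_def)
    qed (use d0 in auto)
  qed
qed

end



lemma sq_int:
  fixes a b :: real
  assumes "a \<le> b"
  shows "((\<lambda>x. (x - (a + b) / 2)^2) has_integral (b - a)^3 / 12) {a..b}"
proof -
  have "((\<lambda>x. (x - (a + b) / 2)^2) has_integral ((b - (a + b) / 2)^3 / 3 - (a - (a + b) / 2)^3 / 3)) {a..b}"
  proof (rule fundamental_theorem_of_calculus[OF assms])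
    fix x assume "x \<in> {a..b}"
    have "((\<lambda>x. (x - (a + b) / 2)^3 / 3) has_real_derivative (x - (a + b) / 2)^2) (at x within {a..b})"
    proof -
      have d1: "((\<lambda>x. x - (a + b) / 2) has_real_derivative 1) (at x within {a..b})"
        using DERIV_diff[OF DERIV_ident DERIV_const] by simp
      have "((\<lambda>x. (x - (a + b) / 2)^3 / 3) has_real_derivative (of_nat 3 * (1 * (x - (a + b) / 2)^(3 - Suc 0)) / 3)) (at x within {a..b})"
        by (rule DERIV_cdivide[OF DERIV_power[OF d1]])
      then show ?thesis by simp
    qed
    then show "((\<lambda>x. (x - (a + b) / 2)^3 / 3) has_vector_derivative (x - (a + b) / 2)^2) (at x within {a..b})"
      by (simp add: has_real_derivative_iff_has_vector_derivative)
  qed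
  moreover have "(b - (a + b) / 2)^3 / 3 - (a - (a + b) / 2)^3 / 3 = (b - a)^3 / 12"
    by (simp add: power3_eq_cube field_simps)
  ultimately show ?thesis by simp
qed

context pdfs begin

lemma set_int_sq: "set_integrable lborel {a..b} (\<lambda>x. (x - c)^2 * f x)"
proof -
  define K where "K = (\<bar>a - c\<bar> + \<bar>b - c\<bar>)^2"
  show ?thesis unfolding set_integrable_def
  proof (rule Bochner_Integration.integrable_bound[of lborel "\<lambda>x. K * f x"])
    show "integrable lborel (\<lambda>x. K * f x)" using intf by simp
    show "(\<lambda>x. indicator {a..b} x *\<^sub>R ((x - c)^2 * f x)) \<in> borel_measurable lborel"
      using meas by measurable
    show "AE x in lborel. norm (indicator {a..b} x *\<^sub>R ((x - c)^2 * f x)) \<le> norm (K * f x)"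
    proof (rule AE_I2)
      fix x
      show "norm (indicator {a..b} x *\<^sub>R ((x - c)^2 * f x)) \<le> norm (K * f x)"
      proof (cases "x \<in> {a..b}")
        case True
        then have "\<bar>x - c\<bar> \<le> \<bar>a - c\<bar> + \<bar>b - c\<bar>" by auto
        then have "\<bar>x - c\<bar>^2 \<le> K" unfolding K_def by (rule power_mono) auto
        then have "(x - c)^2 \<le> K" by simp
        then show ?thesis using True nonneg[of x] by (simp add: abs_mult mult_right_mono K_def)
      qed (use nonneg in \<open>auto simp: abs_mult K_def\<close>)
    qed
  qed
qed

lemma dist_eq:
  "distortion f (N \<delta>) (uni_pts lo \<delta>) (uni_mid lo \<delta>) =
   (\<Sum>i=1..N \<delta>. integral {lo + real (i - 1) * \<delta> .. lo + real i * \<delta>} (\<lambda>x. (x - (lo + (real i - 1/2) * \<delta>))^2 * f x))"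
  unfolding distortion_def uni_pts_def uni_mid_def
  by (rule sum.cong[OF refl], rule set_borel_integral_eq_integral(2)[OF set_int_sq])


lemma sq_int_f:
  "((\<lambda>x. (x - c)^2 * f x) has_integral integral {a..b} (\<lambda>x. (x - c)^2 * f x)) {a..b}"
  using set_borel_integral_eq_integral(1)[OF set_int_sq] by (rule integrable_integral)

lemma cell_mid:
  assumes "1 \<le> i"
  shows "lo + (real i - 1/2) * \<delta> = ((lo + real (i - 1) * \<delta>) + (lo + real i * \<delta>)) / 2"
  using assms by (simp add: of_nat_diff field_simps)

lemma D_upper:
  assumes \<delta>: "0 < \<delta>"
  shows "distortion f (N \<delta>) (uni_pts lo \<delta>) (uni_mid lo \<delta>) \<le> \<delta>^2 / 4"
proof -
  have "integral {lo + real (i - 1) * \<delta> .. lo + real i * \<delta>} (\<lambda>x. (x - (lo + (real i - 1/2) * \<delta>))^2 * f x)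
        \<le> \<delta>^2 / 4 * pp \<delta> i" if i: "i \<in> {1..N \<delta>}" for i
  proof -
    have h2: "((\<lambda>x. \<delta>^2 / 4 * f x) has_integral (\<delta>^2 / 4 * pp \<delta> i)) {lo + real (i - 1) * \<delta> .. lo + real i * \<delta>}"
      unfolding pp_eq by (rule has_integral_mult_right[OF integrable_integral[OF f_int]])
    show ?thesis
  proof (rule has_integral_le[OF sq_int_f h2])
    fix x assume x: "x \<in> {lo + real (i - 1) * \<delta> .. lo + real i * \<delta>}"
    have "\<bar>x - (lo + (real i - 1/2) * \<delta>)\<bar> \<le> \<delta> / 2" using x i by (auto simp: of_nat_diff field_simps abs_le_iff)
    then have "\<bar>x - (lo + (real i - 1/2) * \<delta>)\<bar>^2 \<le> (\<delta> / 2)^2" by (rule power_mono) auto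
    then have "(x - (lo + (real i - 1/2) * \<delta>))^2 \<le> \<delta>^2 / 4" by (simp add: power_divide)
    then show "(x - (lo + (real i - 1/2) * \<delta>))^2 * f x \<le> \<delta>^2 / 4 * f x"
      using nonneg[of x] by (rule mult_right_mono)
  qed
  qed
  then have "distortion f (N \<delta>) (uni_pts lo \<delta>) (uni_mid lo \<delta>) \<le> (\<Sum>i=1..N \<delta>. \<delta>^2 / 4 * pp \<delta> i)"
    unfolding dist_eq by (rule sum_mono)
  also have "\<dots> = \<delta>^2 / 4 * (\<Sum>i=1..N \<delta>. pp \<delta> i)" by (rule sum_distrib_left[symmetric])
  also have "\<dots> = \<delta>^2 / 4" using sum_pp[OF \<delta>] by simp
  finally show ?thesis .
qed

lemma D_lower:
  "eventually (\<lambda>\<delta>. \<delta>^2 / 24 \<le> distortion f (N \<delta>) (uni_pts lo \<delta>) (uni_mid lo \<delta>)) (at_right 0)"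
proof -
  define \<epsilon> where "\<epsilon> = 1 / (4 * (hi - lo + 1))"
  have \<epsilon>: "0 < \<epsilon>" using lohi by (simp add: \<epsilon>_def)
  obtain d where d: "d > 0" "\<And>\<delta> i y. 0 < \<delta> \<Longrightarrow> \<delta> < d \<Longrightarrow> 1 \<le> i \<Longrightarrow> i < N \<delta> \<Longrightarrow>
        y \<in> {lo + real (i - 1) * \<delta> .. lo + real i * \<delta>} \<Longrightarrow> \<bar>f y - pp \<delta> i / \<delta>\<bar> \<le> \<epsilon>"
    using ucell[OF \<epsilon>] by auto
  define d0 where "d0 = min d (min 1 (1 / (4 * Mf)))"
  have d0: "0 < d0" using d Mf_prop by (simp add: d0_def)
  show ?thesis unfolding eventually_at_right_field
  proof (intro exI[of _ d0] conjI allI impI)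
    fix \<delta> :: real assume \<delta>: "0 < \<delta>" "\<delta> < d0"
    have \<delta>d: "\<delta> < d" "\<delta> < 1" "\<delta> * (4 * Mf) < 1" using \<delta> Mf_prop by (auto simp: d0_def less_divide_eq)
    define m where "m i = lo + (real i - 1/2) * \<delta>" for i
    define C where "C i = {lo + real (i - 1) * \<delta> .. lo + real i * \<delta>}" for i
    have trm: "integral (C i) (\<lambda>x. (x - m i)^2 * f x) \<ge>
       \<delta>^2 / 12 * pp \<delta> i - \<epsilon> * \<delta>^3 / 12 - (if i = N \<delta> then \<delta>^2 / 12 * pp \<delta> i else 0)"
      if i: "i \<in> {1..N \<delta>}" for i
    proof (cases "i = N \<delta>")
      case True
      have "0 \<le> integral (C i) (\<lambda>x. (x - m i)^2 * f x)"
        unfolding C_def by (rule integral_nonneg[OF sq_int_f[THEN has_integral_integrable]]) (use nonneg in auto)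
      moreover have "0 \<le> \<epsilon> * \<delta>^3 / 12" using \<epsilon> \<delta> by simp
      ultimately show ?thesis using True by simp
    next
      case False
      then have iN: "i < N \<delta>" using i by auto
      let ?c = "pp \<delta> i / \<delta> - \<epsilon>"
      have h1: "((\<lambda>x. (x - m i)^2 * ?c) has_integral (\<delta>^3 / 12 * ?c)) (C i)"
      proof -
        have i1: "1 \<le> i" using i by simp
        have le: "lo + real (i - 1) * \<delta> \<le> lo + real i * \<delta>" using \<delta> by (simp add: mult_right_mono)
        show ?thesis
          using has_integral_mult_left[OF sq_int[OF le], of ?c]
          unfolding C_def m_def cell_mid[OF i1] cell_len[OF i1] by simp
      qed
      have "\<delta>^3 / 12 * ?c \<le> integral (C i) (\<lambda>x. (x - m i)^2 * f x)"
      proof (rule has_integral_le[OF h1])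
        show "((\<lambda>x. (x - m i)^2 * f x) has_integral integral (C i) (\<lambda>x. (x - m i)^2 * f x)) (C i)"
          unfolding C_def by (rule sq_int_f)
        fix x assume x: "x \<in> C i"
        have "\<bar>f x - pp \<delta> i / \<delta>\<bar> \<le> \<epsilon>" using d(2)[OF \<delta>(1) \<delta>d(1) _ iN] x i unfolding C_def by auto
        then have "?c \<le> f x" by linarith
        then show "(x - m i)^2 * ?c \<le> (x - m i)^2 * f x" by (rule mult_left_mono) simp
      qed
      moreover have "\<delta>^3 / 12 * ?c = \<delta>^2 / 12 * pp \<delta> i - \<epsilon> * \<delta>^3 / 12"
        using \<delta> by (simp add: field_simps power2_eq_square power3_eq_cube)
      ultimately show ?thesis using False by simp
    qed
    have "(\<Sum>i=1..N \<delta>. \<delta>^2 / 12 * pp \<delta> i - \<epsilon> * \<delta>^3 / 12 - (if i = N \<delta> then \<delta>^2 / 12 * pp \<delta> i else 0))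
          \<le> distortion f (N \<delta>) (uni_pts lo \<delta>) (uni_mid lo \<delta>)"
      unfolding dist_eq C_def[symmetric] m_def[symmetric] by (rule sum_mono) (rule trm)
    moreover have "(\<Sum>i=1..N \<delta>. \<delta>^2 / 12 * pp \<delta> i - \<epsilon> * \<delta>^3 / 12 - (if i = N \<delta> then \<delta>^2 / 12 * pp \<delta> i else 0))
       = \<delta>^2 / 12 - real (N \<delta>) * \<epsilon> * \<delta>^3 / 12 - \<delta>^2 / 12 * pp \<delta> (N \<delta>)"
    proof -
      have "(\<Sum>i=1..N \<delta>. \<delta>^2 / 12 * pp \<delta> i) = \<delta>^2 / 12 * (\<Sum>i=1..N \<delta>. pp \<delta> i)" by (rule sum_distrib_left[symmetric])
      then have s1: "(\<Sum>i=1..N \<delta>. \<delta>^2 / 12 * pp \<delta> i) = \<delta>^2 / 12" using sum_pp[OF \<delta>(1)] by simp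
      show ?thesis using N_props(1)[OF \<delta>(1)] s1 by (simp add: sum_subtractf)
    qed
    moreover have "real (N \<delta>) * \<epsilon> * \<delta>^3 / 12 \<le> \<delta>^2 / 48"
    proof -
      have "real (N \<delta>) * \<delta> \<le> hi - lo + 1" using N_props(4)[OF \<delta>(1)] \<delta>d by linarith
      then have "real (N \<delta>) * \<delta> * \<epsilon> \<le> (hi - lo + 1) * \<epsilon>" using \<epsilon> by (intro mult_right_mono) auto
      also have "\<dots> = 1 / 4" using lohi by (simp add: \<epsilon>_def)
      finally have "real (N \<delta>) * \<delta> * \<epsilon> * (\<delta>^2 / 12) \<le> 1 / 4 * (\<delta>^2 / 12)" by (rule mult_right_mono) simp
      then show ?thesis by (simp add: power2_eq_square power3_eq_cube mult_ac)
    qed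
    moreover have "\<delta>^2 / 12 * pp \<delta> (N \<delta>) \<le> \<delta>^2 / 48"
    proof -
      have "pp \<delta> (N \<delta>) \<le> Mf * \<delta>" using pp_bounds(2)[OF \<delta>(1) N_props(1)[OF \<delta>(1)]] .
      also have "\<dots> \<le> 1 / 4" using \<delta>d(3) by (simp add: mult_ac)
      finally have "\<delta>^2 / 12 * pp \<delta> (N \<delta>) \<le> \<delta>^2 / 12 * (1/4)" by (intro mult_left_mono) auto
      then show ?thesis by simp
    qed
    ultimately show "\<delta>^2 / 24 \<le> distortion f (N \<delta>) (uni_pts lo \<delta>) (uni_mid lo \<delta>)" by linarith
  qed (use d0 in auto)
qed

end



lemma gibbs:
  fixes p l :: "nat \<Rightarrow> real"
  assumes "finite S" "\<And>i. i \<in> S \<Longrightarrow> 0 \<le> p i" "sum p S = 1" "(\<Sum>i\<in>S. 2 powr (- l i)) \<le> 1"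
  shows "- (\<Sum>i\<in>S. p i * log 2 (p i)) \<le> (\<Sum>i\<in>S. p i * l i)"
proof -
  have t: "(p i - 2 powr (- l i)) / ln 2 \<le> p i * l i + p i * log 2 (p i)" if i: "i \<in> S" for i
  proof (cases "p i = 0")
    case True
    then show ?thesis by simp
  next
    case False
    then have pi: "0 < p i" using assms(2)[OF i] by simp
    define x where "x = 2 powr (- l i) / p i"
    have xp: "0 < x" using pi by (simp add: x_def)
    have "ln x \<le> x - 1" using xp by (rule ln_le_minus_one)
    moreover have "ln x = (- l i - log 2 (p i)) * ln 2"
      using pi by (simp add: x_def ln_div ln_powr log_def field_simps)
    ultimately have "(- l i - log 2 (p i)) * ln 2 \<le> x - 1" by simp
    then have "p i * ((- l i - log 2 (p i)) * ln 2) \<le> p i * (x - 1)" using pi by (intro mult_left_mono) auto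
    also have "p i * (x - 1) = 2 powr (- l i) - p i" using pi by (simp add: x_def field_simps)
    finally have "- (p i * l i + p i * log 2 (p i)) * ln 2 \<le> 2 powr (- l i) - p i" by (simp add: algebra_simps)
    then show ?thesis by (simp add: divide_le_eq algebra_simps)
  qed
  have "(\<Sum>i\<in>S. (p i - 2 powr (- l i)) / ln 2) \<le> (\<Sum>i\<in>S. p i * l i + p i * log 2 (p i))"
    by (rule sum_mono) (rule t)
  moreover have "(\<Sum>i\<in>S. (p i - 2 powr (- l i)) / ln 2) = (1 - (\<Sum>i\<in>S. 2 powr (- l i))) / ln 2"
    using assms(3) by (simp add: sum_divide_distrib[symmetric] sum_subtractf)
  moreover have "0 \<le> (1 - (\<Sum>i\<in>S. 2 powr (- l i))) / ln 2" using assms(4) by simp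
  ultimately show ?thesis by (simp add: sum.distrib)
qed

lemma second_ge:
  fixes p l :: "nat \<Rightarrow> real"
  assumes "finite S" "\<And>i. i \<in> S \<Longrightarrow> 0 \<le> p i" "sum p S = 1"
  shows "(\<Sum>i\<in>S. p i * l i)^2 \<le> (\<Sum>i\<in>S. p i * (l i)^2)"
proof -
  define E where "E = (\<Sum>i\<in>S. p i * l i)"
  have "0 \<le> (\<Sum>i\<in>S. p i * (l i - E)^2)" using assms(2) by (intro sum_nonneg) auto
  also have "(\<Sum>i\<in>S. p i * (l i - E)^2) = (\<Sum>i\<in>S. p i * (l i)^2 - 2 * E * (p i * l i) + E^2 * p i)"
    by (rule sum.cong) (simp_all add: power2_diff algebra_simps)
  also have "\<dots> = (\<Sum>i\<in>S. p i * (l i)^2) - 2 * E * (\<Sum>i\<in>S. p i * l i) + E^2 * sum p S"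
    by (simp add: sum.distrib sum_subtractf sum_distrib_left)
  finally show ?thesis using assms(3) by (simp add: E_def power2_eq_square)
qed

context pdfs begin

lemma pp_pos:
  assumes \<delta>: "0 < \<delta>" and i: "1 \<le> i" "i \<le> N \<delta>"
  shows "0 < pp \<delta> i"
proof (rule ccontr)
  assume "\<not> 0 < pp \<delta> i"
  then have z: "pp \<delta> i = 0" using pp_bounds(1)[OF \<delta> i(1)] by simp
  define a where "a = lo + real (i - 1) * \<delta>"
  define b where "b = lo + real i * \<delta>"
  define b' where "b' = min b hi"
  have ab: "b - a = \<delta>" using cell_len[OF i(1)] by (simp add: a_def b_def)
  have "real (i - 1) \<le> real (N \<delta>) - 1" using i by (simp add: of_nat_diff)
  then have "real (i - 1) * \<delta> \<le> (real (N \<delta>) - 1) * \<delta>" using \<delta> by (intro mult_right_mono) auto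
  then have ahi: "a < hi" using N_props(2)[OF \<delta>] by (simp add: a_def algebra_simps)
  have alo: "lo \<le> a" using \<delta> by (simp add: a_def)
  have ab': "a < b'" using ahi ab \<delta> by (simp add: b'_def)
  have b'b: "b' \<le> b" "b' \<le> hi" by (auto simp: b'_def)
  have "integral {a..b'} f + integral {b'..b} f = integral {a..b} f"
    by (rule Henstock_Kurzweil_Integration.integral_combine) (use ab' b'b f_int in auto)
  moreover have "integral {a..b} f = 0" using z by (simp add: pp_eq a_def b_def)
  moreover have "0 \<le> integral {a..b'} f" "0 \<le> integral {b'..b} f"
    by (rule integral_nonneg[OF f_int], use nonneg in auto)+
  ultimately have "integral {a..b'} f = 0" by linarith
  then have hz: "(f has_integral 0) (cbox a b')" using integrable_integral[OF f_int, of a b'] by (simp add: cbox_interval)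
  have fz: "f x = 0" if "x \<in> {a..b'}" for x
  proof (rule has_integral_0_cbox_imp_0[OF _ _ hz])
    show "continuous_on (cbox a b') f" using cont by (rule continuous_on_subset) (use alo b'b in \<open>auto simp: cbox_interval\<close>)
  qed (use nonneg that ab' in \<open>auto simp: cbox_interval box_real\<close>)
  define x0 where "x0 = (a + b') / 2"
  have "x0 \<in> closure {x. f x \<noteq> 0}" unfolding supp using alo ab' b'b by (auto simp: x0_def)
  then obtain y where y: "f y \<noteq> 0" "dist y x0 < (b' - a) / 2"
  proof -
    have "\<forall>e>0. \<exists>y\<in>{x. f x \<noteq> 0}. dist y x0 < e" using \<open>x0 \<in> closure {x. f x \<noteq> 0}\<close> closure_approachable by blast
    moreover have "0 < (b' - a) / 2" using ab' by simp
    ultimately show ?thesis using that by blast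
  qed
  then have "\<bar>y - x0\<bar> < (b' - a) / 2" by (simp add: dist_real_def)
  then have "y \<in> {a..b'}" unfolding x0_def abs_less_iff by (auto simp: field_simps)
  then show False using fz y(1) by simp
qed

definition H :: "real \<Rightarrow> real" where "H \<delta> = - (\<Sum>i=1..N \<delta>. pp \<delta> i * log 2 (pp \<delta> i))"
definition S2 :: "real \<Rightarrow> real" where "S2 \<delta> = (\<Sum>i=1..N \<delta>. pp \<delta> i * (log 2 (pp \<delta> i))^2)"

lemma aoi_lower:
  assumes \<delta>: "0 < \<delta>" and l: "real_code (N \<delta>) l"
  shows "3 / 2 * H \<delta> \<le> aoi_zw f (N \<delta>) (uni_pts lo \<delta>) l"
proof -
  define E where "E = mean_len f (N \<delta>) (uni_pts lo \<delta>) l"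
  define E2 where "E2 = second_moment_len f (N \<delta>) (uni_pts lo \<delta>) l"
  have Ed: "E = (\<Sum>i=1..N \<delta>. pp \<delta> i * l i)" by (simp add: E_def mean_len_def pp_def)
  have E2d: "E2 = (\<Sum>i=1..N \<delta>. pp \<delta> i * (l i)^2)" by (simp add: E2_def second_moment_len_def pp_def)
  have p0: "\<And>i. i \<in> {1..N \<delta>} \<Longrightarrow> 0 \<le> pp \<delta> i" using pp_bounds(1)[OF \<delta>] by auto
  have Ep: "0 < E" unfolding Ed
  proof (rule sum_pos)
    show "{1..N \<delta>} \<noteq> {}" using N_props(1)[OF \<delta>] by auto
    fix i assume "i \<in> {1..N \<delta>}"
    then show "0 < pp \<delta> i * l i" using pp_pos[OF \<delta>] l by (auto simp: real_code_def)
  qed simp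
  have "H \<delta> \<le> E" unfolding H_def Ed
    by (rule gibbs[OF _ p0 sum_pp[OF \<delta>]]) (use l in \<open>auto simp: real_code_def\<close>)
  moreover have "E^2 \<le> E2" unfolding Ed E2d by (rule second_ge[OF _ p0 sum_pp[OF \<delta>]]) auto
  then have "E / 2 \<le> E2 / (2 * E)" using Ep by (simp add: field_simps power2_eq_square)
  ultimately have "3 / 2 * H \<delta> \<le> E2 / (2 * E) + E" by linarith
  then show ?thesis by (simp add: aoi_zw_def E_def E2_def)
qed

lemma aoi_bounds:
  assumes \<delta>: "0 < \<delta>" and N2: "2 \<le> N \<delta>"
  shows "3 / 2 * H \<delta> \<le> aoi_opt f (N \<delta>) (uni_pts lo \<delta>)"
    "aoi_opt f (N \<delta>) (uni_pts lo \<delta>) \<le> S2 \<delta> / (2 * H \<delta>) + H \<delta>"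
proof -
  define l where "l i = - log 2 (pp \<delta> i)" for i
  have plt1: "pp \<delta> i < 1" if i: "i \<in> {1..N \<delta>}" for i
  proof -
    have "\<exists>j\<in>{1..N \<delta>}. j \<noteq> i"
    proof (cases "i = 1")
      case True then show ?thesis using N2 by (intro bexI[of _ 2]) auto
    next
      case False then show ?thesis using N2 by (intro bexI[of _ 1]) auto
    qed
    then obtain j where j: "j \<in> {1..N \<delta>}" "j \<noteq> i" by blast
    have "pp \<delta> i + pp \<delta> j \<le> (\<Sum>k=1..N \<delta>. pp \<delta> k)"
    proof -
      have "(\<Sum>k\<in>{i,j}. pp \<delta> k) \<le> (\<Sum>k=1..N \<delta>. pp \<delta> k)"
        by (rule sum_mono2) (use i j pp_bounds(1)[OF \<delta>] in auto)
      then show ?thesis using j by simp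
    qed
    moreover have "0 < pp \<delta> j" using pp_pos[OF \<delta>] j by auto
    ultimately show ?thesis using sum_pp[OF \<delta>] by linarith
  qed
  have lc: "real_code (N \<delta>) l" unfolding real_code_def
  proof
    show "\<forall>i\<in>{1..N \<delta>}. 0 < l i" using plt1 pp_pos[OF \<delta>] by (auto simp: l_def)
    have "(\<Sum>i=1..N \<delta>. 2 powr (- l i)) = (\<Sum>i=1..N \<delta>. pp \<delta> i)"
      by (rule sum.cong) (use pp_pos[OF \<delta>] in \<open>auto simp: l_def\<close>)
    then show "(\<Sum>i=1..N \<delta>. 2 powr (- l i)) \<le> 1" using sum_pp[OF \<delta>] by simp
  qed
  have lo_b: "\<forall>l\<in>{l. real_code (N \<delta>) l}. 3 / 2 * H \<delta> \<le> aoi_zw f (N \<delta>) (uni_pts lo \<delta>) l"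
    using aoi_lower[OF \<delta>] by auto
  show "3 / 2 * H \<delta> \<le> aoi_opt f (N \<delta>) (uni_pts lo \<delta>)"
    unfolding aoi_opt_def by (rule cINF_greatest) (use lc lo_b in auto)
  have "aoi_opt f (N \<delta>) (uni_pts lo \<delta>) \<le> aoi_zw f (N \<delta>) (uni_pts lo \<delta>) l"
    unfolding aoi_opt_def
    by (rule cINF_lower[OF bdd_belowI[of _ "3 / 2 * H \<delta>"]]) (use lc lo_b in auto)
  also have "aoi_zw f (N \<delta>) (uni_pts lo \<delta>) l = S2 \<delta> / (2 * H \<delta>) + H \<delta>"
    by (simp add: aoi_zw_def mean_len_def second_moment_len_def S2_def H_def l_def pp_def sum_negf)
  finally show "aoi_opt f (N \<delta>) (uni_pts lo \<delta>) \<le> S2 \<delta> / (2 * H \<delta>) + H \<delta>" .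
qed

end



lemma ev_lt: "0 < (c::real) \<Longrightarrow> eventually (\<lambda>\<delta>. \<delta> < c) (at_right 0)"
  by (auto simp: eventually_at_right_field intro!: exI[of _ c])

lemma L_bot: "filterlim (\<lambda>\<delta>::real. log 2 \<delta>) at_bot (at_right 0)"
  unfolding log_def by real_asymp

lemma L_inf: "filterlim (\<lambda>\<delta>::real. log 2 \<delta>) at_infinity (at_right 0)"
  using filterlim_mono[OF L_bot at_bot_le_at_infinity order_refl] .

lemma mL_top: "filterlim (\<lambda>\<delta>::real. - log 2 \<delta>) at_top (at_right 0)"
  unfolding log_def by real_asymp

context pdfs begin

definition A :: "real \<Rightarrow> real" where "A \<delta> = (\<Sum>i=1..N \<delta>. \<delta> * (pp \<delta> i / \<delta> * log 2 (pp \<delta> i / \<delta>)))"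
definition Bq :: "real \<Rightarrow> real" where "Bq \<delta> = (\<Sum>i=1..N \<delta>. \<delta> * (pp \<delta> i / \<delta> * (log 2 (pp \<delta> i / \<delta>))^2))"

lemma idH: assumes \<delta>: "0 < \<delta>" shows "H \<delta> = - A \<delta> - log 2 \<delta>"
proof -
  have "A \<delta> = (\<Sum>i=1..N \<delta>. pp \<delta> i * log 2 (pp \<delta> i) - log 2 \<delta> * pp \<delta> i)"
    unfolding A_def by (rule sum.cong) (use pp_pos[OF \<delta>] \<delta> in \<open>auto simp: log_divide algebra_simps\<close>)
  also have "\<dots> = - H \<delta> - log 2 \<delta>"
    using sum_pp[OF \<delta>] by (simp add: H_def sum_subtractf sum_distrib_left[symmetric])
  finally show ?thesis by simp
qed

lemma idS: assumes \<delta>: "0 < \<delta>" shows "S2 \<delta> = Bq \<delta> + 2 * log 2 \<delta> * A \<delta> + (log 2 \<delta>)^2"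
proof -
  let ?L = "log 2 \<delta>"
  have "S2 \<delta> = (\<Sum>i=1..N \<delta>. \<delta> * (pp \<delta> i / \<delta> * (log 2 (pp \<delta> i / \<delta>))^2)
        + 2 * ?L * (\<delta> * (pp \<delta> i / \<delta> * log 2 (pp \<delta> i / \<delta>))) + ?L^2 * pp \<delta> i)"
    unfolding S2_def
  proof (rule sum.cong[OF refl])
    fix i assume i: "i \<in> {1..N \<delta>}"
    have p: "0 < pp \<delta> i" using pp_pos[OF \<delta>] i by auto
    have e1: "\<delta> * (pp \<delta> i / \<delta>) = pp \<delta> i" using \<delta> by simp
    have e2: "log 2 (pp \<delta> i / \<delta>) = log 2 (pp \<delta> i) - ?L" using p \<delta> by (simp add: log_divide)
    show "pp \<delta> i * (log 2 (pp \<delta> i))^2 = \<delta> * (pp \<delta> i / \<delta> * (log 2 (pp \<delta> i / \<delta>))^2)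
        + 2 * ?L * (\<delta> * (pp \<delta> i / \<delta> * log 2 (pp \<delta> i / \<delta>))) + ?L^2 * pp \<delta> i"
      unfolding e2 mult.assoc[symmetric] e1 by (simp add: power2_eq_square algebra_simps)
  qed
  also have "\<dots> = Bq \<delta> + 2 * ?L * A \<delta> + ?L^2 * (\<Sum>i=1..N \<delta>. pp \<delta> i)"
    by (simp add: Bq_def A_def sum.distrib sum_distrib_left)
  finally show ?thesis using sum_pp[OF \<delta>] by simp
qed

lemma N2_ev: "eventually (\<lambda>\<delta>. 2 \<le> N \<delta>) (at_right 0)"
proof -
  have "eventually (\<lambda>\<delta>. 0 < \<delta> \<and> \<delta> < hi - lo) (at_right 0)"
    using eventually_conj[OF eventually_at_right_less ev_lt[of "hi - lo"]] lohi by simp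
  then show ?thesis
  proof (rule eventually_mono)
    fix \<delta> :: real assume \<delta>: "0 < \<delta> \<and> \<delta> < hi - lo"
    show "2 \<le> N \<delta>"
    proof (rule ccontr)
      assume "\<not> 2 \<le> N \<delta>"
      then have "real (N \<delta>) \<le> 1" by simp
      then have "real (N \<delta>) * \<delta> \<le> 1 * \<delta>" using \<delta> by (intro mult_right_mono) auto
      then show False using N_props(3)[of \<delta>] \<delta> by linarith
    qed
  qed
qed

lemma main:
  assumes ent: "(LINT x:{lo..hi}|lborel. f x * log 2 (f x)) = integral {lo..hi} (\<lambda>x. f x * log 2 (f x))"
  shows "((\<lambda>\<delta>. aoi_opt f (uni_num lo hi \<delta>) (uni_pts lo \<delta>)
              / log 2 (distortion f (uni_num lo hi \<delta>) (uni_pts lo \<delta>) (uni_mid lo \<delta>)))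
           \<longlongrightarrow> - 3 / 4) (at_right 0)
       \<and> ((\<lambda>\<delta>. aoi_opt f (uni_num lo hi \<delta>) (uni_pts lo \<delta>) + 3 / 2 * log 2 \<delta>)
           \<longlongrightarrow> 3 / 2 * diff_entropy f lo hi) (at_right 0)"
proof -
  define a0 where "a0 = integral {lo..hi} (\<lambda>x. f x * log 2 (f x))"
  define b0 where "b0 = integral {lo..hi} (\<lambda>x. f x * (log 2 (f x))^2)"
  define aoi where "aoi \<delta> = aoi_opt f (N \<delta>) (uni_pts lo \<delta>)" for \<delta>
  define D where "D \<delta> = distortion f (N \<delta>) (uni_pts lo \<delta>) (uni_mid lo \<delta>)" for \<delta>
  have Alim: "(A \<longlongrightarrow> a0) (at_right 0)"
  proof -
    have "((\<lambda>\<delta>. (A \<delta> - a0) + a0) \<longlongrightarrow> 0 + a0) (at_right 0)"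
      using gen[OF cont_xlog(1)[OF Mf_prop(1)]] unfolding A_def a0_def by (intro tendsto_add) auto
    then show ?thesis by simp
  qed
  have Blim: "(Bq \<longlongrightarrow> b0) (at_right 0)"
  proof -
    have "((\<lambda>\<delta>. (Bq \<delta> - b0) + b0) \<longlongrightarrow> 0 + b0) (at_right 0)"
      using gen[OF cont_xlog(2)[OF Mf_prop(1)]] unfolding Bq_def b0_def by (intro tendsto_add) auto
    then show ?thesis by simp
  qed
  have Htop: "filterlim (\<lambda>\<delta>. - A \<delta> + - log 2 \<delta>) at_top (at_right 0)"
    by (rule filterlim_tendsto_add_at_top[OF tendsto_minus[OF Alim] mL_top])
  have Hpos: "eventually (\<lambda>\<delta>. 0 < - A \<delta> + - log 2 \<delta>) (at_right 0)"
  proof -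
    have "\<forall>Z. eventually (\<lambda>\<delta>. Z < - A \<delta> + - log 2 \<delta>) (at_right 0)" using Htop unfolding filterlim_at_top_dense by blast
    then show ?thesis by blast
  qed
  have ev: "eventually (\<lambda>\<delta>. 0 < \<delta> \<and> \<delta> < 1 \<and> 2 \<le> N \<delta> \<and> 0 < - A \<delta> + - log 2 \<delta>
      \<and> \<delta>^2 / 24 \<le> D \<delta>) (at_right 0)"
    using eventually_conj[OF eventually_at_right_less eventually_conj[OF ev_lt[of 1] eventually_conj[OF N2_ev eventually_conj[OF Hpos D_lower]]]]
    unfolding D_def by simp
  define lowf where "lowf \<delta> = - 3 / 2 * A \<delta>" for \<delta>
  define upf where "upf \<delta> = - 3 / 2 * A \<delta> + (Bq \<delta> - (A \<delta>)^2) / (2 * (- A \<delta> + - log 2 \<delta>))" for \<delta>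
  have bnds: "eventually (\<lambda>\<delta>. lowf \<delta> \<le> aoi \<delta> + 3 / 2 * log 2 \<delta> \<and> aoi \<delta> + 3 / 2 * log 2 \<delta> \<le> upf \<delta>) (at_right 0)"
    using ev
  proof (rule eventually_mono)
    fix \<delta> :: real assume h: "0 < \<delta> \<and> \<delta> < 1 \<and> 2 \<le> N \<delta> \<and> 0 < - A \<delta> + - log 2 \<delta> \<and> \<delta>^2 / 24 \<le> D \<delta>"
    then have \<delta>: "0 < \<delta>" and N2: "2 \<le> N \<delta>" and Hp: "0 < H \<delta>" using idH by auto
    have b1: "3 / 2 * H \<delta> \<le> aoi \<delta>" "aoi \<delta> \<le> S2 \<delta> / (2 * H \<delta>) + H \<delta>"
      using aoi_bounds[OF \<delta> N2] by (auto simp: aoi_def)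
    have "S2 \<delta> / (2 * H \<delta>) + H \<delta> = 3 / 2 * H \<delta> + (S2 \<delta> - (H \<delta>)^2) / (2 * H \<delta>)"
      using Hp by (simp add: field_simps power2_eq_square)
    also have "S2 \<delta> - (H \<delta>)^2 = Bq \<delta> - (A \<delta>)^2"
      unfolding idS[OF \<delta>] idH[OF \<delta>] by (simp add: power2_eq_square algebra_simps)
    finally have fin: "S2 \<delta> / (2 * H \<delta>) + H \<delta> = 3 / 2 * H \<delta> + (Bq \<delta> - (A \<delta>)^2) / (2 * H \<delta>)" .
    then show "lowf \<delta> \<le> aoi \<delta> + 3 / 2 * log 2 \<delta> \<and> aoi \<delta> + 3 / 2 * log 2 \<delta> \<le> upf \<delta>"
    proof -
      have q: "(Bq \<delta> - (A \<delta>)^2) / (2 * H \<delta>) = (Bq \<delta> - (A \<delta>)^2) / (2 * (- A \<delta> + - log 2 \<delta>))"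
        using idH[OF \<delta>] by simp
      show ?thesis using b1 idH[OF \<delta>] q fin unfolding lowf_def upf_def by linarith
    qed
  qed
  have lowlim: "(lowf \<longlongrightarrow> - 3 / 2 * a0) (at_right 0)"
    unfolding lowf_def by (intro tendsto_intros Alim)
  have uplim: "(upf \<longlongrightarrow> - 3 / 2 * a0 + 0) (at_right 0)"
    unfolding upf_def
  proof (intro tendsto_add tendsto_mult tendsto_const Alim tendsto_divide_0)
    show "((\<lambda>\<delta>. Bq \<delta> - (A \<delta>)^2) \<longlongrightarrow> b0 - a0^2) (at_right 0)" by (intro tendsto_intros Alim Blim)
    show "filterlim (\<lambda>\<delta>. 2 * (- A \<delta> + - log 2 \<delta>)) at_infinity (at_right 0)"
      by (rule filterlim_at_top_imp_at_infinity, rule filterlim_tendsto_pos_mult_at_top[OF tendsto_const _ Htop]) simp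
  qed
  have P2: "((\<lambda>\<delta>. aoi \<delta> + 3 / 2 * log 2 \<delta>) \<longlongrightarrow> - 3 / 2 * a0) (at_right 0)"
    by (rule tendsto_sandwich[OF eventually_mono[OF bnds] eventually_mono[OF bnds] lowlim]) (use uplim in auto)
  have ent2: "3 / 2 * diff_entropy f lo hi = - 3 / 2 * a0"
    unfolding diff_entropy_def ent a0_def by simp
  have G1: "((\<lambda>\<delta>. (aoi \<delta> + 3 / 2 * log 2 \<delta>) / log 2 \<delta> - 3 / 2) \<longlongrightarrow> 0 - 3 / 2) (at_right 0)"
    by (intro tendsto_diff tendsto_const tendsto_divide_0[OF P2 L_inf])
  have G2low: "((\<lambda>\<delta>. 2 - 2 / log 2 \<delta>) \<longlongrightarrow> 2 - 0) (at_right 0)"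
    by (intro tendsto_diff tendsto_const tendsto_divide_0[OF tendsto_const L_inf])
  have G2up: "((\<lambda>\<delta>. 2 - log 2 24 / log 2 \<delta>) \<longlongrightarrow> 2 - 0) (at_right 0)"
    by (intro tendsto_diff tendsto_const tendsto_divide_0[OF tendsto_const L_inf])
  have G2bnd: "eventually (\<lambda>\<delta>. 2 - 2 / log 2 \<delta> \<le> log 2 (D \<delta>) / log 2 \<delta> \<and> log 2 (D \<delta>) / log 2 \<delta> \<le> 2 - log 2 24 / log 2 \<delta>) (at_right 0)"
    using ev
  proof (rule eventually_mono)
    fix \<delta> :: real assume h: "0 < \<delta> \<and> \<delta> < 1 \<and> 2 \<le> N \<delta> \<and> 0 < - A \<delta> + - log 2 \<delta> \<and> \<delta>^2 / 24 \<le> D \<delta>"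
    then have \<delta>: "0 < \<delta>" "\<delta> < 1" and Dl: "\<delta>^2 / 24 \<le> D \<delta>" by auto
    have Du: "D \<delta> \<le> \<delta>^2 / 4" using D_upper[OF \<delta>(1)] by (simp add: D_def)
    have L: "log 2 \<delta> < 0" using \<delta> by simp
    have "0 < \<delta>^2 / 24" using \<delta> by simp
    then have Dp: "0 < D \<delta>" using Dl by linarith
    have l1: "log 2 (\<delta>^2 / 24) \<le> log 2 (D \<delta>)" using Dl \<delta> by (intro log_mono) auto
    have l2: "log 2 (D \<delta>) \<le> log 2 (\<delta>^2 / 4)" using Du Dp by (intro log_mono) auto
    have e24: "log 2 (\<delta>^2 / 24) = 2 * log 2 \<delta> - log 2 24" using \<delta> by (simp add: log_divide log_nat_power)
    have e4: "log 2 (\<delta>^2 / 4) = 2 * log 2 \<delta> - 2"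
    proof -
      have "log 2 ((2::real)^2) = real 2 * log 2 2" by (rule log_nat_power) simp
      then have "log 2 ((2::real)^2) = 2" by simp
      then have "log 2 (4::real) = 2" by simp
      then show ?thesis using \<delta> by (simp add: log_divide log_nat_power)
    qed
    have "log 2 (D \<delta>) / log 2 \<delta> \<le> (2 * log 2 \<delta> - log 2 24) / log 2 \<delta>"
      using l1 e24 L by (simp add: divide_right_mono_neg)
    moreover have "(2 * log 2 \<delta> - 2) / log 2 \<delta> \<le> log 2 (D \<delta>) / log 2 \<delta>"
      using l2 e4 L by (simp add: divide_right_mono_neg)
    moreover have "(2 * log 2 \<delta> - log 2 24) / log 2 \<delta> = 2 - log 2 24 / log 2 \<delta>" using L by (simp add: field_simps)
    moreover have "(2 * log 2 \<delta> - 2) / log 2 \<delta> = 2 - 2 / log 2 \<delta>" using L by (simp add: field_simps)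
    ultimately show "2 - 2 / log 2 \<delta> \<le> log 2 (D \<delta>) / log 2 \<delta> \<and> log 2 (D \<delta>) / log 2 \<delta> \<le> 2 - log 2 24 / log 2 \<delta>" by simp
  qed
  have G2: "((\<lambda>\<delta>. log 2 (D \<delta>) / log 2 \<delta>) \<longlongrightarrow> 2) (at_right 0)"
    using tendsto_sandwich[OF eventually_mono[OF G2bnd] eventually_mono[OF G2bnd] G2low G2up] by auto
  have R: "((\<lambda>\<delta>. ((aoi \<delta> + 3 / 2 * log 2 \<delta>) / log 2 \<delta> - 3 / 2) / (log 2 (D \<delta>) / log 2 \<delta>)) \<longlongrightarrow> (0 - 3 / 2) / 2) (at_right 0)"
    by (rule tendsto_divide[OF G1 G2]) simp
  have P1: "((\<lambda>\<delta>. aoi \<delta> / log 2 (D \<delta>)) \<longlongrightarrow> - 3 / 4) (at_right 0)"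
  proof -
    have "eventually (\<lambda>\<delta>. ((aoi \<delta> + 3 / 2 * log 2 \<delta>) / log 2 \<delta> - 3 / 2) / (log 2 (D \<delta>) / log 2 \<delta>) = aoi \<delta> / log 2 (D \<delta>)) (at_right 0)"
      using ev
    proof (rule eventually_mono)
      fix \<delta> :: real assume h: "0 < \<delta> \<and> \<delta> < 1 \<and> 2 \<le> N \<delta> \<and> 0 < - A \<delta> + - log 2 \<delta> \<and> \<delta>^2 / 24 \<le> D \<delta>"
      then have "log 2 \<delta> < 0" by simp
      then have L: "log 2 \<delta> \<noteq> 0" by simp
      show "((aoi \<delta> + 3 / 2 * log 2 \<delta>) / log 2 \<delta> - 3 / 2) / (log 2 (D \<delta>) / log 2 \<delta>) = aoi \<delta> / log 2 (D \<delta>)"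
        using L by (cases "log 2 (D \<delta>) = 0") (simp_all add: field_simps)
    qed
    from tendsto_cong[OF this] R show ?thesis by simp
  qed
  show ?thesis using P1 P2 ent2 unfolding aoi_def D_def N_def by simp
qed

end

theorem theorem2:
  fixes f :: "real \<Rightarrow> real" and lo hi :: real
  assumes pdf_meas: "f \<in> borel_measurable lborel"
    and pdf_nonneg: "\<And>x. 0 \<le> f x"
    and pdf_int: "integrable lborel f"
    and pdf_total: "(\<integral>x. f x \<partial>lborel) = 1"
    and I_nontriv: "lo < hi"
    and supp_out: "\<And>x. x \<notin> {lo..hi} \<Longrightarrow> f x = 0"
    and supp: "closure {x. f x \<noteq> 0} = {lo..hi}"
    and A_cont: "continuous_on {lo..hi} f"
    and A_diff: "\<And>x. x \<in> {lo..hi} \<Longrightarrow> f differentiable (at x within {lo..hi})"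
    and B_sq: "set_integrable lborel {lo..hi} (\<lambda>x. f x * (log 2 (f x))^2)"
    and B_ent: "set_integrable lborel {lo..hi} (\<lambda>x. f x * log 2 (f x))"
  shows "((\<lambda>\<delta>. aoi_opt f (uni_num lo hi \<delta>) (uni_pts lo \<delta>)
              / log 2 (distortion f (uni_num lo hi \<delta>) (uni_pts lo \<delta>) (uni_mid lo \<delta>)))
           \<longlongrightarrow> - 3 / 4) (at_right 0)
       \<and> ((\<lambda>\<delta>. aoi_opt f (uni_num lo hi \<delta>) (uni_pts lo \<delta>) + 3 / 2 * log 2 \<delta>)
           \<longlongrightarrow> 3 / 2 * diff_entropy f lo hi) (at_right 0)"
proof -
  interpret P: pdfs f lo hi
    using pdf_meas pdf_nonneg pdf_int pdf_total I_nontriv supp_out supp A_cont by unfold_locales auto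
  have ent: "(LINT x:{lo..hi}|lborel. f x * log 2 (f x)) = integral {lo..hi} (\<lambda>x. f x * log 2 (f x))"
    by (rule set_borel_integral_eq_integral(2)[OF B_ent])
  show ?thesis using P.main[OF ent] .
qed

end
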